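(* Let $\chi\in\mathcal S(\mathbb R^m)$ with $\int\chi=1$. (i) If $\gamma(\varepsilon)=\log(1/\varepsilon)$, then every element of $\iota^\gamma_\chi(W^{-1,\infty}(\mathbb R^m))$ is of log-type, and for every $u\in L^\infty(\mathbb R^m)$, $\iota^\gamma_\chi(u)$ is of bounded type and $\partial^\alpha\iota^\gamma_\chi(u)$ is of log-type for all $|\alpha|=1$. (ii) Let $\gamma$ be an admissible scaling and $k\in\mathbb N_0$. If $u\in W^{-k,\infty}(\mathbb R^m)$, then $\iota^\gamma_\chi(u)$ is of $\gamma^k$-type. In particular, for every $u\in W^{-k,\infty}(\mathbb R^m)$ there is an admissible scaling $\gamma$ such that $\iota^\gamma_\chi(u)$ and all $\partial_j\iota^\gamma_\chi(u)$, $j=1,\dots,m$, are of log-type.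
   Context: Colombeau framework: for $q\in\mathbb N_0$, $\mathcal A_q(\mathbb R)$ is the set of $\phi_0\in\mathcal D(\mathbb R)$ with $\int\phi_0=1$ and $\int t^j\phi_0(t)\,dt=0$ for $1\le j\le q$; $\mathcal A_q(\mathbb R^m)$ is the set of $\phi=\phi_0\otimes\cdots\otimes\phi_0$ ($m$ factors) with $\phi_0\in\mathcal A_q(\mathbb R)$. For $\varepsilon>0$, $\phi_\varepsilon(x)=\varepsilon^{-m}\phi(x/\varepsilon)$, and $l(\phi_0)=\sup\{|t|:\phi_0(t)\ne0\}$. $\mathcal G(\mathbb R^m)$ is the (special-variant) Colombeau algebra: classes of moderate maps $U:\mathcal A_0(\mathbb R^m)\times\mathbb R^m\to\mathbb C$, smooth in $x$, modulo negligible ones; $U(\phi,x)$ denotes a representative. An admissible scaling is a continuous $\gamma:(0,1)\to\mathbb R_+$ with $\gamma(r)=O(1/r)$, $\gamma(r)\to\infty$, and $\gamma(sr)=O(\gamma(r))$ for each fixed $0<s<1$, as $r\to0$. Embedding: for $\chi\in\mathcal S(\mathbb R^m)$ with $\int\chi=1$ and $u\in\mathcal S'(\mathbb R^m)$, $\iota^\gamma_\chi(u)$ is the class of $(\phi,x)\mapsto u*\chi^\gamma(\phi,\cdot)(x)$, where $\chi^\gamma(\phi,x)=\gamma(l(\phi_0))^m\chi(\gamma(l(\phi_0))x)$ for $\phi=\phi_0\otimes\cdots\otimes\phi_0\in\mathcal A_0(\mathbb R^m)$. For a function $\rho:(0,1)\to\mathbb R_+$, $U\in\mathcal G$ is of $\rho$-type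 if there is $N\in\mathbb N_0$ such that for all $\phi\in\mathcal A_N(\mathbb R^m)$ there are $C>0$, $0<\eta<1$ with $\sup_y|U(\phi_\varepsilon,y)|\le N\rho(C\varepsilon)$ for $0<\varepsilon<\eta$; "log-type" means $\rho(r)=\log(1/r)$, "$\gamma^k$-type" means $\rho=\gamma^k$. $U$ is of bounded type if there is $N$ such that for all $\phi\in\mathcal A_N$ there are $C,\eta>0$ with $\sup_y|U(\phi_\varepsilon,y)|\le C$ for $0<\varepsilon<\eta$. $W^{-k,\infty}(\mathbb R^m)$ is the set of distributions $\sum_{|\beta|\le k}\partial^\beta u_\beta$ with $u_\beta\in L^\infty(\mathbb R^m)$. *)

theory Defs
  imports "HOL-Analysis.Analysis" "HOL-Library.Landau_Symbols"
begin

definition smooth1 :: "(real \<Rightarrow> complex) \<Rightarrow> bool" where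
  "smooth1 f \<longleftrightarrow> (\<exists>D. D 0 = f \<and>
      (\<forall>n t. (D n has_vector_derivative D (Suc n) t) (at t)))"

definition testfun1 :: "(real \<Rightarrow> complex) \<Rightarrow> bool" where
  "testfun1 f \<longleftrightarrow> smooth1 f \<and> compact (closure {t. f t \<noteq> 0})"

definition A1 :: "nat \<Rightarrow> (real \<Rightarrow> complex) set" where
  "A1 q = {f. testfun1 f \<and> (LINT t|lborel. f t) = 1 \<and>
      (\<forall>j. 1 \<le> j \<and> j \<le> q \<longrightarrow> (LINT t|lborel. (complex_of_real t) ^ j * f t) = 0)}"

definition lsupp :: "(real \<Rightarrow> complex) \<Rightarrow> real" where
  "lsupp f = Sup {\<bar>t\<bar> | t. f t \<noteq> 0}"

definition tensor :: "(real \<Rightarrow> complex) \<Rightarrow> real^'m \<Rightarrow> complex" where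
  "tensor f x = (\<Prod>i\<in>UNIV. f (x $ i))"

definition Am :: "nat \<Rightarrow> (real^'m \<Rightarrow> complex) set" where
  "Am q = {tensor f | f. f \<in> A1 q}"

definition lm :: "(real^'m \<Rightarrow> complex) \<Rightarrow> real" where
  "lm \<phi> = lsupp (THE f. f \<in> A1 0 \<and> tensor f = \<phi>)"

definition scale :: "real \<Rightarrow> (real^'m \<Rightarrow> complex) \<Rightarrow> real^'m \<Rightarrow> complex" where
  "scale \<epsilon> \<phi> x = complex_of_real (1 / \<epsilon> ^ CARD('m)) * \<phi> ((1 / \<epsilon>) *\<^sub>R x)"

definition pd :: "'m \<Rightarrow> (real^'m \<Rightarrow> complex) \<Rightarrow> real^'m \<Rightarrow> complex" where
  "pd j f x = vector_derivative (\<lambda>t. f (x + t *\<^sub>R axis j 1)) (at 0)"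

fun pdl :: "'m list \<Rightarrow> (real^'m \<Rightarrow> complex) \<Rightarrow> real^'m \<Rightarrow> complex" where
  "pdl [] f = f"
| "pdl (j # js) f = pd j (pdl js f)"

definition smoothm :: "(real^'m \<Rightarrow> complex) \<Rightarrow> bool" where
  "smoothm f \<longleftrightarrow> (\<forall>js. continuous_on UNIV (pdl js f) \<and>
      (\<forall>j x. (\<lambda>t. pdl js f (x + t *\<^sub>R axis j 1)) differentiable (at 0)))"

definition schwartz :: "(real^'m \<Rightarrow> complex) \<Rightarrow> bool" where
  "schwartz f \<longleftrightarrow> smoothm f \<and>
      (\<forall>js (N::nat). \<exists>C. \<forall>x. (1 + norm x) ^ N * norm (pdl js f x) \<le> C)"

definition Linf :: "(real^'m \<Rightarrow> complex) \<Rightarrow> bool" where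
  "Linf f \<longleftrightarrow> f \<in> borel_measurable lborel \<and> (\<exists>C. AE x in lborel. norm (f x) \<le> C)"

definition admissible :: "(real \<Rightarrow> real) \<Rightarrow> bool" where
  "admissible \<gamma> \<longleftrightarrow> continuous_on {0<..<1} \<gamma> \<and> (\<forall>r\<in>{0<..<1}. \<gamma> r > 0) \<and>
     \<gamma> \<in> O[at_right 0](\<lambda>r. 1 / r) \<and> filterlim \<gamma> at_top (at_right 0) \<and>
     (\<forall>s\<in>{0<..<1}. (\<lambda>r. \<gamma> (s * r)) \<in> O[at_right 0](\<gamma>))"

definition chi_gamma :: "(real \<Rightarrow> real) \<Rightarrow> (real^'m \<Rightarrow> complex) \<Rightarrow> (real^'m \<Rightarrow> complex)
    \<Rightarrow> real^'m \<Rightarrow> complex" where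
  "chi_gamma \<gamma> \<kappa> \<phi> x = complex_of_real ((\<gamma> (lm \<phi>)) ^ CARD('m)) * \<kappa> (\<gamma> (lm \<phi>) *\<^sub>R x)"

text \<open>Representative of iota(u) for u in L infinity: (phi,x) |-> (u * chi^gamma(phi,.))(x)\<close>
definition emb_Linf :: "(real \<Rightarrow> real) \<Rightarrow> (real^'m \<Rightarrow> complex) \<Rightarrow> (real^'m \<Rightarrow> complex)
    \<Rightarrow> (real^'m \<Rightarrow> complex) \<Rightarrow> real^'m \<Rightarrow> complex" where
  "emb_Linf \<gamma> \<kappa> u \<phi> x = (LINT y|lborel. u y * chi_gamma \<gamma> \<kappa> \<phi> (x - y))"

text \<open>Representative of iota(u) for u = sum_{length js <= k} d_js v_js in W^{-k,infinity}:
  (u * psi)(x) = sum_js <d_js v_js, psi(x - .)> = sum_js int v_js(y) (d_js psi)(x - y) dy\<close>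
definition emb_W :: "(real \<Rightarrow> real) \<Rightarrow> (real^'m \<Rightarrow> complex) \<Rightarrow> nat
    \<Rightarrow> ('m list \<Rightarrow> real^'m \<Rightarrow> complex) \<Rightarrow> (real^'m \<Rightarrow> complex) \<Rightarrow> real^'m \<Rightarrow> complex" where
  "emb_W \<gamma> \<kappa> k v \<phi> x =
     (\<Sum>js\<in>{js. length js \<le> k}. LINT y|lborel. v js y * pdl js (chi_gamma \<gamma> \<kappa> \<phi>) (x - y))"

definition rho_type :: "(real \<Rightarrow> real) \<Rightarrow> ((real^'m \<Rightarrow> complex) \<Rightarrow> real^'m \<Rightarrow> complex) \<Rightarrow> bool" where
  "rho_type \<rho> U \<longleftrightarrow> (\<exists>N::nat. \<forall>\<phi>\<in>Am N. \<exists>C>0. \<exists>\<eta>. 0 < \<eta> \<and> \<eta> < 1 \<and>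
      (\<forall>\<epsilon>. 0 < \<epsilon> \<and> \<epsilon> < \<eta> \<longrightarrow> (\<forall>y. norm (U (scale \<epsilon> \<phi>) y) \<le> real N * \<rho> (C * \<epsilon>))))"

definition bounded_type :: "((real^'m \<Rightarrow> complex) \<Rightarrow> real^'m \<Rightarrow> complex) \<Rightarrow> bool" where
  "bounded_type U \<longleftrightarrow> (\<exists>N::nat. \<forall>\<phi>\<in>Am N. \<exists>C>0. \<exists>\<eta>>0.
      (\<forall>\<epsilon>. 0 < \<epsilon> \<and> \<epsilon> < \<eta> \<longrightarrow> (\<forall>y. norm (U (scale \<epsilon> \<phi>) y) \<le> C)))"

definition logfun :: "real \<Rightarrow> real" where
  "logfun r = ln (1 / r)"

end

theory Submission
  imports Defs "HOL-Probability.Sinc_Integral" "HOL-Real_Asymp.Real_Asymp"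
begin

lemma integrable_inv_1_sq: "integrable lborel (\<lambda>t::real. inverse (1 + t^2))"
proof -
  have "set_integrable lborel (einterval (-\<infinity>) \<infinity>) (\<lambda>x::real. inverse (1 + x^2))"
    by (rule integrable_inverse_1_plus_square)
  moreover have "einterval (-\<infinity>) \<infinity> = (UNIV :: real set)" by (auto simp: einterval_def)
  ultimately show ?thesis by (simp add: set_integrable_def)
qed

lemma integrable_decay:
  "integrable lborel (\<lambda>x::'a::euclidean_space. 1 / (1 + norm x) ^ (2 * DIM('a)))"
proof -
  interpret P: product_sigma_finite "\<lambda>_::'a. lborel :: real measure"
    by (simp add: product_sigma_finite_def lborel.sigma_finite_measure_axioms)
  let ?T = "\<lambda>f. \<Sum>b\<in>Basis. f b *\<^sub>R (b::'a)"
  let ?G = "\<lambda>x::'a. 1 / (1 + norm x) ^ (2 * DIM('a))"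
  have int1: "integrable (PiM Basis (\<lambda>_. lborel)) (\<lambda>f. \<Prod>b\<in>(Basis::'a set). inverse (1 + (f b)^2::real))"
    using P.product_integrable_prod[where f="\<lambda>_ t. inverse (1 + t^2)" and I="Basis::'a set"] integrable_inv_1_sq by simp
  have "integrable (PiM Basis (\<lambda>_. lborel)) (\<lambda>f. ?G (?T f))"
  proof (rule Bochner_Integration.integrable_bound[OF int1])
    show "(\<lambda>f. ?G (?T f)) \<in> borel_measurable (PiM Basis (\<lambda>_. lborel))" by measurable
    show "AE f in PiM Basis (\<lambda>_. lborel). norm (?G (?T f)) \<le> norm (\<Prod>b\<in>(Basis::'a set). inverse (1 + (f b)^2))"
    proof (intro AE_I2)
      fix f :: "'a \<Rightarrow> real"
      define x where "x = ?T f"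
      have xb: "x \<bullet> b = f b" if "b \<in> Basis" for b
        using that unfolding x_def by (simp add: inner_sum_left inner_Basis if_distrib cong: if_cong)
      have le: "(\<Prod>b\<in>(Basis::'a set). (1 + (f b)^2)) \<le> (\<Prod>b\<in>(Basis::'a set). (1 + norm x)^2)"
      proof (rule prod_mono)
        fix b :: 'a assume b: "b \<in> Basis"
        have "\<bar>f b\<bar> \<le> norm x" using Basis_le_norm[OF b, of x] xb[OF b] by simp
        then have "(f b)^2 \<le> (norm x)^2" by (metis abs_le_square_iff abs_norm_cancel)
        then show "0 \<le> 1 + (f b)^2 \<and> 1 + (f b)^2 \<le> (1 + norm x)^2"
        proof -
          have e: "(1 + norm x)^2 = 1 + 2 * norm x + (norm x)^2" by (simp add: power2_eq_square algebra_simps)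
          show ?thesis using e norm_ge_zero[of x] \<open>(f b)^2 \<le> (norm x)^2\<close> zero_le_power2[of "f b"] by linarith
        qed
      qed
      have eq: "(\<Prod>b\<in>(Basis::'a set). (1 + norm x)^2) = (1 + norm x) ^ (2 * DIM('a))"
        by (simp add: power_mult[symmetric] mult.commute)
      have pos: "0 < (\<Prod>b\<in>(Basis::'a set). (1 + (f b)^2))"
        by (intro prod_pos) (auto simp: add_pos_nonneg)
      have "?G x \<le> inverse (\<Prod>b\<in>(Basis::'a set). (1 + (f b)^2))"
        using le eq pos by (simp add: divide_simps)
      also have "\<dots> = (\<Prod>b\<in>(Basis::'a set). inverse (1 + (f b)^2))"
        by (simp add: prod_inversef[symmetric])
      finally show "norm (?G (?T f)) \<le> norm (\<Prod>b\<in>(Basis::'a set). inverse (1 + (f b)^2))"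
        unfolding x_def by (simp add: prod_nonneg abs_prod[symmetric])
    qed
  qed
  then have "integrable (distr (PiM Basis (\<lambda>_. lborel)) borel ?T) ?G"
    by (subst integrable_distr_eq) auto
  then show ?thesis by (simp add: lborel_eq[symmetric])
qed

lemma nn_integral_affine_eucl:
  fixes f :: "'a::euclidean_space \<Rightarrow> ennreal"
  assumes [measurable]: "f \<in> borel_measurable borel" and c: "c \<noteq> 0"
  shows "(\<integral>\<^sup>+x. f x \<partial>lborel) = ennreal (\<bar>c\<bar>^DIM('a)) * (\<integral>\<^sup>+x. f (t + c *\<^sub>R x) \<partial>lborel)"
  by (subst lborel_affine[OF c, of t])
     (simp add: nn_integral_density nn_integral_distr nn_integral_cmult)

lemma integrable_affine_eucl:
  fixes f :: "'a::euclidean_space \<Rightarrow> 'b :: {banach, second_countable_topology}"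
  assumes f: "integrable lborel f" and c: "c \<noteq> 0"
  shows "integrable lborel (\<lambda>x. f (t + c *\<^sub>R x))"
  using f f[THEN borel_measurable_integrable] c unfolding integrable_iff_bounded
  by (subst (asm) nn_integral_affine_eucl[where c=c and t=t]) (auto simp: ennreal_mult_less_top)

lemma integral_affine_eucl:
  fixes f :: "'a::euclidean_space \<Rightarrow> 'b :: {banach, second_countable_topology}"
  assumes f: "integrable lborel f" and c: "c \<noteq> 0"
  shows "(\<integral>x. f x \<partial>lborel) = \<bar>c\<bar>^DIM('a) *\<^sub>R (\<integral>x. f (t + c *\<^sub>R x) \<partial>lborel)"
  using c f f[THEN borel_measurable_integrable] integrable_affine_eucl[OF f c, of t]
  by (subst lborel_affine[OF c, of t]) (simp add: integral_density integral_distr)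

lemma integrable_mult_bounded:
  fixes v G :: "'a::euclidean_space \<Rightarrow> complex"
  assumes v: "v \<in> borel_measurable lborel" and B: "AE y in lborel. norm (v y) \<le> B"
    and G: "integrable lborel G"
  shows "integrable lborel (\<lambda>y. v y * G y)"
proof (rule Bochner_Integration.integrable_bound[where f="\<lambda>y. B * norm (G y)"])
  show "integrable lborel (\<lambda>y. B * norm (G y))" using G by auto
  show "(\<lambda>y. v y * G y) \<in> borel_measurable lborel"
    using v G[THEN borel_measurable_integrable] by measurable
  show "AE y in lborel. norm (v y * G y) \<le> norm (B * norm (G y))"
    using B
  proof eventually_elim
    case (elim y)
    then have "norm (v y * G y) \<le> B * norm (G y)"
      by (simp add: norm_mult mult_right_mono)
    also have "\<dots> \<le> norm (B * norm (G y))" by simp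
    finally show ?case .
  qed
qed

lemma norm_integral_mult_bounded:
  fixes v G :: "'a::euclidean_space \<Rightarrow> complex"
  assumes v: "v \<in> borel_measurable lborel" and B: "AE y in lborel. norm (v y) \<le> B"
    and G: "integrable lborel G"
  shows "norm (LINT y|lborel. v y * G y) \<le> B * (LINT y|lborel. norm (G y))"
proof -
  have "norm (LINT y|lborel. v y * G y) \<le> (LINT y|lborel. norm (v y * G y))"
    by (rule integral_norm_bound)
  also have "\<dots> \<le> (LINT y|lborel. B * norm (G y))"
  proof (rule integral_mono_AE)
    show "integrable lborel (\<lambda>y. norm (v y * G y))"
      using integrable_mult_bounded[OF v B G] by auto
    show "integrable lborel (\<lambda>y. B * norm (G y))" using G by auto
    show "AE y in lborel. norm (v y * G y) \<le> B * norm (G y)"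
      using B by eventually_elim (simp add: norm_mult mult_right_mono)
  qed
  also have "\<dots> = B * (LINT y|lborel. norm (G y))" by simp
  finally show ?thesis .
qed


lemma vd_bound:
  fixes f f' :: "real \<Rightarrow> 'b::real_normed_vector"
  assumes d: "\<And>s. s \<in> closed_segment a b \<Longrightarrow> (f has_vector_derivative f' s) (at s)"
    and bd: "\<And>s. s \<in> closed_segment a b \<Longrightarrow> norm (f' s) \<le> B"
  shows "norm (f b - f a) \<le> B * \<bar>b - a\<bar>"
proof -
  have "norm (f b - f a) \<le> B * norm (b - a)"
  proof (rule differentiable_bound[where f'="\<lambda>s h. h *\<^sub>R f' s" and S="closed_segment a b"])
    show "convex (closed_segment a b)" by simp
    show "(f has_derivative (\<lambda>h. h *\<^sub>R f' x)) (at x within closed_segment a b)"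
      if "x \<in> closed_segment a b" for x
      using d[OF that] unfolding has_vector_derivative_def
      by (rule has_derivative_at_withinI)
    show "onorm (\<lambda>h. h *\<^sub>R f' x) \<le> B" if "x \<in> closed_segment a b" for x
    proof (rule onorm_le)
      fix h :: real
      have "norm (h *\<^sub>R f' x) = \<bar>h\<bar> * norm (f' x)" by simp
      also have "\<dots> \<le> \<bar>h\<bar> * B" using bd[OF that] by (simp add: mult_left_mono)
      finally show "norm (h *\<^sub>R f' x) \<le> B * norm h" by (simp add: mult.commute)
    qed
  qed auto
  then show ?thesis by simp
qed

lemma integrable_reflect_shift:
  fixes G :: "'a::euclidean_space \<Rightarrow> 'b :: {banach, second_countable_topology}"
  assumes "integrable lborel G"
  shows "integrable lborel (\<lambda>y. G (w - y))"
  using integrable_affine_eucl[OF assms, of "-1" w] by simp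

lemma integral_reflect_shift:
  fixes G :: "'a::euclidean_space \<Rightarrow> 'b :: {banach, second_countable_topology}"
  assumes "integrable lborel G"
  shows "(LINT y|lborel. G (w - y)) = (LINT y|lborel. G y)"
  using integral_affine_eucl[OF assms, of "-1" w] by simp

lemma taylor1_bound:
  fixes g g1 g2 :: "'a::real_normed_vector \<Rightarrow> 'b::real_normed_vector"
  assumes dg: "\<And>z s. ((\<lambda>t. g (z + t *\<^sub>R e)) has_vector_derivative g1 (z + s *\<^sub>R e)) (at s)"
  and dg1: "\<And>z s. ((\<lambda>t. g1 (z + t *\<^sub>R e)) has_vector_derivative g2 (z + s *\<^sub>R e)) (at s)"
  and Hb: "\<And>s. \<bar>s\<bar> \<le> 1 \<Longrightarrow> norm (g2 (z + s *\<^sub>R e)) \<le> Hz"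
  and h: "\<bar>h\<bar> \<le> 1"
  shows "norm (g (z + h *\<^sub>R e) - g z - h *\<^sub>R g1 z) \<le> h^2 * Hz"
proof -
  have "norm ((\<lambda>s. g (z + s *\<^sub>R e)) h - (\<lambda>s. g (z + s *\<^sub>R e)) 0 - (h - 0) *\<^sub>R (\<lambda>s. g1 (z + s *\<^sub>R e)) 0)
      \<le> norm (h - 0) * (\<bar>h\<bar> * Hz)"
  proof (rule vector_differentiable_bound_linearization[where S="closed_segment 0 h"])
    show "((\<lambda>s. g (z + s *\<^sub>R e)) has_vector_derivative g1 (z + x *\<^sub>R e)) (at x within closed_segment 0 h)" for x
      using dg[of z x] by (rule has_vector_derivative_at_within)
    show "0 \<in> closed_segment 0 h" by simp
    show "closed_segment 0 h \<subseteq> closed_segment 0 h" by simp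
    show "norm (g1 (z + x *\<^sub>R e) - g1 (z + 0 *\<^sub>R e)) \<le> \<bar>h\<bar> * Hz" if x: "x \<in> closed_segment 0 h" for x
    proof -
      have xh: "\<bar>x\<bar> \<le> \<bar>h\<bar>" using x by (auto simp: closed_segment_eq_real_ivl split: if_splits)
      have "norm ((\<lambda>s. g1 (z + s *\<^sub>R e)) x - (\<lambda>s. g1 (z + s *\<^sub>R e)) 0) \<le> Hz * \<bar>x - 0\<bar>"
      proof (rule vd_bound)
        show "((\<lambda>s. g1 (z + s *\<^sub>R e)) has_vector_derivative g2 (z + s *\<^sub>R e)) (at s)" for s
          by (rule dg1)
        show "norm (g2 (z + s *\<^sub>R e)) \<le> Hz" if "s \<in> closed_segment 0 x" for s
        proof (rule Hb)
          have "\<bar>s\<bar> \<le> \<bar>x\<bar>" using that by (auto simp: closed_segment_eq_real_ivl split: if_splits)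
          then show "\<bar>s\<bar> \<le> 1" using xh h by linarith
        qed
      qed
      moreover have "0 \<le> Hz" using Hb[of 0] by (simp add: order_trans[OF norm_ge_zero])
      ultimately show ?thesis using xh
        by simp (metis mult.commute mult_left_mono order_trans)
    qed
  qed
  then show ?thesis by (simp add: power2_eq_square abs_mult_self_eq mult.assoc)
qed


lemma conv_has_vderiv:
  fixes v g g1 g2 :: "'a::euclidean_space \<Rightarrow> complex"
  assumes v: "v \<in> borel_measurable lborel" and B: "AE y in lborel. norm (v y) \<le> B"
  and g: "integrable lborel g" and g1: "integrable lborel g1"
  and dg: "\<And>z s. ((\<lambda>t. g (z + t *\<^sub>R e)) has_vector_derivative g1 (z + s *\<^sub>R e)) (at s)"
  and dg1: "\<And>z s. ((\<lambda>t. g1 (z + t *\<^sub>R e)) has_vector_derivative g2 (z + s *\<^sub>R e)) (at s)"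
  and H: "integrable lborel H" and Hb: "\<And>z s. \<bar>s\<bar> \<le> 1 \<Longrightarrow> norm (g2 (z + s *\<^sub>R e)) \<le> H z"
  shows "((\<lambda>t. LINT y|lborel. v y * g (x + t *\<^sub>R e - y)) has_vector_derivative
           (LINT y|lborel. v y * g1 (x - y))) (at 0)"
proof -
  define F where "F t = (LINT y|lborel. v y * g (x + t *\<^sub>R e - y))" for t
  define D where "D = (LINT y|lborel. v y * g1 (x - y))"
  define IH where "IH = (LINT y|lborel. H y)"
  have B0: "0 \<le> B"
  proof (rule ccontr)
    assume "\<not> 0 \<le> B"
    have "AE y::'a in lborel. False" using B
      by (rule AE_mp) (use \<open>\<not> 0 \<le> B\<close> in \<open>auto intro!: AE_I2 simp: order_trans[OF norm_ge_zero]\<close>)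
    then have "ae_filter (lborel::'a measure) = bot" using trivial_limit_def by blast
    then show False by (simp add: ae_filter_eq_bot_iff)
  qed
  have intg: "integrable lborel (\<lambda>y. v y * g (w - y))" for w
    by (rule integrable_mult_bounded[OF v B integrable_reflect_shift[OF g]])
  have intg1: "integrable lborel (\<lambda>y. v y * g1 (w - y))" for w
    by (rule integrable_mult_bounded[OF v B integrable_reflect_shift[OF g1]])
  have key: "norm (F h - F 0 - h *\<^sub>R D) \<le> B * (h^2 * IH)" if h: "\<bar>h\<bar> \<le> 1" for h
  proof -
    define R where "R y = g (x + h *\<^sub>R e - y) - g (x - y) - h *\<^sub>R g1 (x - y)" for y
    have intR: "integrable lborel R"
      unfolding R_def using g g1
      by (intro Bochner_Integration.integrable_diff integrable_scaleR_right integrable_reflect_shift)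
    have "F h - F 0 - h *\<^sub>R D = (LINT y|lborel. v y * R y)"
    proof -
      have "(LINT y|lborel. v y * R y) = (LINT y|lborel. v y * g (x + h *\<^sub>R e - y) - v y * g (x - y) - h *\<^sub>R (v y * g1 (x - y)))"
        unfolding R_def by (intro Bochner_Integration.integral_cong) (auto simp: algebra_simps scaleR_conv_of_real)
      also have "\<dots> = F h - F 0 - h *\<^sub>R D"
      proof -
        note ia = intg[of "x + h *\<^sub>R e"] and ib = intg[of x] and ic = intg1[of x]
        show ?thesis
          unfolding F_def D_def
          by (simp add: Bochner_Integration.integral_diff[OF Bochner_Integration.integrable_diff[OF ia ib] integrable_scaleR_right[OF ic]]
             Bochner_Integration.integral_diff[OF ia ib])
      qed
      finally show ?thesis by simp
    qed
    also have "norm \<dots> \<le> B * (LINT y|lborel. norm (R y))"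
      by (rule norm_integral_mult_bounded[OF v B intR])
    also have "(LINT y|lborel. norm (R y)) \<le> (LINT y|lborel. h^2 * H (x - y))"
    proof (rule integral_mono)
      show "integrable lborel (\<lambda>y. norm (R y))" using intR by auto
      show "integrable lborel (\<lambda>y. h^2 * H (x - y))"
        using integrable_reflect_shift[OF H] by auto
      show "norm (R y) \<le> h^2 * H (x - y)" for y
      proof -
        have eq: "x + h *\<^sub>R e - y = (x - y) + h *\<^sub>R e" by (simp add: algebra_simps)
        show ?thesis unfolding R_def eq
          by (rule taylor1_bound[OF dg dg1 Hb h])
      qed
    qed
    also have "(LINT y|lborel. h^2 * H (x - y)) = h^2 * IH"
      unfolding IH_def using integral_reflect_shift[OF H, of x] by simp
    finally show ?thesis using B0 by (simp add: mult_left_mono)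
  qed
  have "(F has_vector_derivative D) (at 0)"
    unfolding has_vector_derivative_def has_derivative_at
  proof (intro conjI)
    show "bounded_linear (\<lambda>h. h *\<^sub>R D)" by (rule bounded_linear_scaleR_left)
    show "(\<lambda>h. norm (F (0 + h) - F 0 - h *\<^sub>R D) / norm h) \<midarrow>0\<rightarrow> 0"
    proof (rule Lim_null_comparison[where g="\<lambda>h. B * IH * \<bar>h\<bar>"])
      have bnd: "norm (norm (F (0 + h) - F 0 - h *\<^sub>R D) / norm h) \<le> B * IH * \<bar>h\<bar>"
        if h0: "h \<noteq> 0" and h1': "\<bar>h\<bar> < 1" for h :: real
      proof -
        have h1: "\<bar>h\<bar> \<le> 1" using h1' by simp
        have "norm (F (0 + h) - F 0 - h *\<^sub>R D) / norm h \<le> B * (h^2 * IH) / \<bar>h\<bar>"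
          using key[OF h1] h0 by (simp add: divide_right_mono)
        also have "\<dots> = B * IH * \<bar>h\<bar>"
        proof -
          have "h^2 = \<bar>h\<bar> * \<bar>h\<bar>" by (metis abs_mult_self_eq power2_eq_square)
          then have "B * (h^2 * IH) / \<bar>h\<bar> = B * IH * (\<bar>h\<bar> * \<bar>h\<bar> / \<bar>h\<bar>)" by (simp only: mult_ac times_divide_eq_right)
          also have "\<bar>h\<bar> * \<bar>h\<bar> / \<bar>h\<bar> = \<bar>h\<bar>" using h0 by (simp only: nonzero_mult_div_cancel_left abs_eq_0 not_False_eq_True)
          finally show ?thesis .
        qed
        finally show ?thesis by simp
      qed
      show "\<forall>\<^sub>F h in at 0. norm (norm (F (0 + h) - F 0 - h *\<^sub>R D) / norm h) \<le> B * IH * \<bar>h\<bar>"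
        unfolding eventually_at using bnd by (intro exI[of _ 1]) (auto simp: dist_real_def)
      show "((\<lambda>h. B * IH * \<bar>h\<bar>) \<longlongrightarrow> 0) (at 0)"
        by (auto intro!: tendsto_eq_intros)
    qed
  qed
  then show ?thesis unfolding F_def[abs_def] D_def .
qed


section \<open>Schwartz functions\<close>

lemma schwartz_cont:
  assumes "schwartz \<kappa>" shows "continuous_on UNIV (pdl js \<kappa>)"
  using assms by (simp add: schwartz_def smoothm_def)

lemma schwartz_meas:
  assumes "schwartz \<kappa>" shows "pdl js \<kappa> \<in> borel_measurable borel"
  by (rule borel_measurable_continuous_onI[OF schwartz_cont[OF assms]])

lemma schwartz_deriv:
  fixes \<kappa> :: "real^'m \<Rightarrow> complex"
  assumes "schwartz \<kappa>"
  shows "((\<lambda>t. pdl js \<kappa> (z + t *\<^sub>R axis j 1)) has_vector_derivative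
           pdl (j # js) \<kappa> (z + s *\<^sub>R axis j 1)) (at s)"
proof -
  define w where "w = z + s *\<^sub>R axis j (1::real)"
  have dif: "(\<lambda>t. pdl js \<kappa> (w + t *\<^sub>R axis j 1)) differentiable (at 0)"
    using assms by (simp add: schwartz_def smoothm_def)
  have d0: "((\<lambda>t. pdl js \<kappa> (w + t *\<^sub>R axis j 1)) has_vector_derivative pdl (j # js) \<kappa> w) (at 0)"
    using vector_derivative_works[THEN iffD1, OF dif] by (simp add: pd_def)
  have d1: "((\<lambda>t. t - s) has_vector_derivative 1) (at s)"
    by (auto intro!: derivative_eq_intros)
  have "(((\<lambda>t. pdl js \<kappa> (w + t *\<^sub>R axis j 1)) \<circ> (\<lambda>t. t - s)) has_vector_derivative 1 *\<^sub>R pdl (j # js) \<kappa> w) (at s)"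
    by (rule vector_diff_chain_at[OF d1]) (use d0 in simp)
  moreover have "((\<lambda>t. pdl js \<kappa> (w + t *\<^sub>R axis j 1)) \<circ> (\<lambda>t. t - s)) = (\<lambda>t. pdl js \<kappa> (z + t *\<^sub>R axis j 1))"
    by (auto simp: w_def fun_eq_iff algebra_simps)
  ultimately show ?thesis by (simp add: w_def)
qed

lemma schwartz_decay:
  fixes \<kappa> :: "real^'m \<Rightarrow> complex"
  assumes "schwartz \<kappa>"
  shows "\<exists>K\<ge>0. \<forall>x. norm (pdl js \<kappa> x) \<le> K / (1 + norm x) ^ p"
proof -
  obtain C where C: "\<And>x. (1 + norm x) ^ p * norm (pdl js \<kappa> x) \<le> C"
    using assms unfolding schwartz_def by blast
  have "norm (pdl js \<kappa> x) \<le> C / (1 + norm x) ^ p" for x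
    using C[of x] by (simp add: pos_le_divide_eq mult.commute add_pos_nonneg)
  moreover have "0 \<le> C" using C[of 0] by (meson mult_nonneg_nonneg norm_ge_zero order_trans zero_le_power add_nonneg_nonneg zero_le_one)
  ultimately show ?thesis by blast
qed

lemma integrable_decay_m:
  "integrable lborel (\<lambda>x::real^'m. 1 / (1 + norm x) ^ (2 * CARD('m)))"
  using integrable_decay[where 'a="real^'m"] by simp

lemma schwartz_integrable:
  fixes \<kappa> :: "real^'m \<Rightarrow> complex"
  assumes "schwartz \<kappa>"
  shows "integrable lborel (pdl js \<kappa>)"
proof -
  obtain K where K: "K \<ge> 0" "\<And>x. norm (pdl js \<kappa> x) \<le> K / (1 + norm x) ^ (2 * CARD('m))"
    using schwartz_decay[OF assms] by blast
  show ?thesis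
  proof (rule Bochner_Integration.integrable_bound[where f="\<lambda>x. K * (1 / (1 + norm x) ^ (2 * CARD('m)))"])
    show "integrable lborel (\<lambda>x::real^'m. K * (1 / (1 + norm x) ^ (2 * CARD('m))))"
      using integrable_mult_right[OF integrable_decay_m[where 'm='m], of K] by simp
    show "pdl js \<kappa> \<in> borel_measurable lborel" using schwartz_meas[OF assms] by simp
    show "AE x in lborel. norm (pdl js \<kappa> x) \<le> norm (K * (1 / (1 + norm x) ^ (2 * CARD('m))))"
      using K by (intro AE_I2) (simp add: abs_of_nonneg)
  qed
qed

definition chiS :: "real \<Rightarrow> (real^'m \<Rightarrow> complex) \<Rightarrow> real^'m \<Rightarrow> complex" where
  "chiS \<Gamma> \<kappa> x = complex_of_real (\<Gamma> ^ CARD('m)) * \<kappa> (\<Gamma> *\<^sub>R x)"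

lemma chi_gamma_chiS: "chi_gamma \<gamma> \<kappa> \<phi> = chiS (\<gamma> (lm \<phi>)) \<kappa>"
  by (simp add: fun_eq_iff chi_gamma_def chiS_def)

lemma scaled_deriv:
  fixes \<kappa> :: "real^'m \<Rightarrow> complex"
  assumes "schwartz \<kappa>"
  shows "((\<lambda>t. of_real c * pdl js \<kappa> (\<Gamma> *\<^sub>R (z + t *\<^sub>R axis j 1))) has_vector_derivative
          of_real (c * \<Gamma>) * pdl (j # js) \<kappa> (\<Gamma> *\<^sub>R (z + s *\<^sub>R axis j 1))) (at s)"
proof -
  have d1: "((\<lambda>t. \<Gamma> * t) has_vector_derivative \<Gamma>) (at s)"
    by (auto intro!: derivative_eq_intros)
  have "(((\<lambda>u. pdl js \<kappa> (\<Gamma> *\<^sub>R z + u *\<^sub>R axis j 1)) \<circ> (\<lambda>t. \<Gamma> * t)) has_vector_derivative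
      \<Gamma> *\<^sub>R pdl (j # js) \<kappa> (\<Gamma> *\<^sub>R z + (\<Gamma> * s) *\<^sub>R axis j 1)) (at s)"
    by (rule vector_diff_chain_at[OF d1]) (rule schwartz_deriv[OF assms])
  then have "((\<lambda>t. pdl js \<kappa> (\<Gamma> *\<^sub>R (z + t *\<^sub>R axis j 1))) has_vector_derivative
      \<Gamma> *\<^sub>R pdl (j # js) \<kappa> (\<Gamma> *\<^sub>R (z + s *\<^sub>R axis j 1))) (at s)"
    by (simp add: o_def scaleR_add_right)
  from has_vector_derivative_mult_right[OF this, of "of_real c"]
  show ?thesis by (simp add: scaleR_conv_of_real mult_ac)
qed

lemma pdl_chiS:
  fixes \<kappa> :: "real^'m \<Rightarrow> complex"
  assumes "schwartz \<kappa>"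
  shows "pdl js (chiS \<Gamma> \<kappa>) = (\<lambda>x. of_real (\<Gamma> ^ CARD('m) * \<Gamma> ^ length js) * pdl js \<kappa> (\<Gamma> *\<^sub>R x))"
proof (induction js)
  case Nil
  then show ?case by (simp add: fun_eq_iff chiS_def)
next
  case (Cons j js)
  show ?case
  proof
    fix x
    have "pdl (j # js) (chiS \<Gamma> \<kappa>) x = pd j (pdl js (chiS \<Gamma> \<kappa>)) x" by simp
    also have "\<dots> = vector_derivative (\<lambda>t. of_real (\<Gamma> ^ CARD('m) * \<Gamma> ^ length js) * pdl js \<kappa> (\<Gamma> *\<^sub>R (x + t *\<^sub>R axis j 1))) (at 0)"
      unfolding pd_def Cons.IH ..
    also have "\<dots> = of_real (\<Gamma> ^ CARD('m) * \<Gamma> ^ length js * \<Gamma>) * pdl (j # js) \<kappa> (\<Gamma> *\<^sub>R (x + 0 *\<^sub>R axis j 1))"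
      by (rule vector_derivative_at[OF scaled_deriv[OF assms]])
    finally show "pdl (j # js) (chiS \<Gamma> \<kappa>) x = of_real (\<Gamma> ^ CARD('m) * \<Gamma> ^ length (j # js)) * pdl (j # js) \<kappa> (\<Gamma> *\<^sub>R x)"
      by (simp add: mult_ac)
  qed
qed


lemma chiS_integrable:
  fixes \<kappa> :: "real^'m \<Rightarrow> complex"
  assumes "schwartz \<kappa>" "\<Gamma> \<noteq> 0"
  shows "integrable lborel (pdl js (chiS \<Gamma> \<kappa>))"
proof -
  have "integrable lborel (\<lambda>x. pdl js \<kappa> (0 + \<Gamma> *\<^sub>R x))"
    by (rule integrable_affine_eucl[OF schwartz_integrable[OF assms(1)] assms(2)])
  then show ?thesis unfolding pdl_chiS[OF assms(1)] by simp
qed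

lemma chiS_int_norm:
  fixes \<kappa> :: "real^'m \<Rightarrow> complex"
  assumes "schwartz \<kappa>" "\<Gamma> \<noteq> 0"
  shows "(LINT y|lborel. norm (pdl js (chiS \<Gamma> \<kappa>) y)) = \<bar>\<Gamma>\<bar> ^ length js * (LINT y|lborel. norm (pdl js \<kappa> y))"
proof -
  have i: "integrable lborel (\<lambda>y. norm (pdl js \<kappa> y))"
    using schwartz_integrable[OF assms(1)] by auto
  have e: "(LINT y|lborel. norm (pdl js \<kappa> y)) = \<bar>\<Gamma>\<bar> ^ CARD('m) * (LINT y|lborel. norm (pdl js \<kappa> (0 + \<Gamma> *\<^sub>R y)))"
    using integral_affine_eucl[OF i assms(2), of 0] by simp
  have "(LINT y|lborel. norm (pdl js (chiS \<Gamma> \<kappa>) y))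
      = \<bar>\<Gamma>\<bar> ^ CARD('m) * \<bar>\<Gamma>\<bar> ^ length js * (LINT y|lborel. norm (pdl js \<kappa> (\<Gamma> *\<^sub>R y)))"
    unfolding pdl_chiS[OF assms(1)] by (simp add: norm_mult norm_power power_abs)
  also have "\<dots> = \<bar>\<Gamma>\<bar> ^ length js * (LINT y|lborel. norm (pdl js \<kappa> y))"
    using e by simp
  finally show ?thesis .
qed

lemma AE_bound_nonneg:
  fixes v :: "'a::euclidean_space \<Rightarrow> 'b::real_normed_vector"
  assumes B: "AE y in lborel. norm (v y) \<le> B"
  shows "0 \<le> B"
proof (rule ccontr)
  assume "\<not> 0 \<le> B"
  have "AE y::'a in lborel. False" using B
    by (rule AE_mp) (use \<open>\<not> 0 \<le> B\<close> in \<open>auto intro!: AE_I2 simp: order_trans[OF norm_ge_zero]\<close>)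
  then have "ae_filter (lborel::'a measure) = bot" using trivial_limit_def by blast
  then show False by (simp add: ae_filter_eq_bot_iff)
qed

lemma term_bound:
  fixes \<kappa> :: "real^'m \<Rightarrow> complex"
  assumes "schwartz \<kappa>" "\<Gamma> \<noteq> 0"
    and v: "v \<in> borel_measurable lborel" and B: "AE y in lborel. norm (v y) \<le> B"
  shows "norm (LINT y|lborel. v y * pdl js (chiS \<Gamma> \<kappa>) (x - y))
         \<le> B * (\<bar>\<Gamma>\<bar> ^ length js * (LINT y|lborel. norm (pdl js \<kappa> y)))"
proof -
  have G: "integrable lborel (\<lambda>y. pdl js (chiS \<Gamma> \<kappa>) (x - y))"
    by (rule integrable_reflect_shift[OF chiS_integrable[OF assms(1,2)]])
  have "norm (LINT y|lborel. v y * pdl js (chiS \<Gamma> \<kappa>) (x - y))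
     \<le> B * (LINT y|lborel. norm (pdl js (chiS \<Gamma> \<kappa>) (x - y)))"
    by (rule norm_integral_mult_bounded[OF v B G])
  also have "(LINT y|lborel. norm (pdl js (chiS \<Gamma> \<kappa>) (x - y))) = (LINT y|lborel. norm (pdl js (chiS \<Gamma> \<kappa>) y))"
    using integral_reflect_shift[of "\<lambda>y. norm (pdl js (chiS \<Gamma> \<kappa>) y)" x] chiS_integrable[OF assms(1,2)]
    by auto
  finally show ?thesis unfolding chiS_int_norm[OF assms(1,2)] .
qed

lemma peetre:
  fixes z :: "real^'m"
  assumes "\<bar>s\<bar> \<le> 1"
  shows "1 + norm (\<Gamma> *\<^sub>R z) \<le> (1 + \<bar>\<Gamma>\<bar>) * (1 + norm (\<Gamma> *\<^sub>R (z + s *\<^sub>R axis j 1)))"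
proof -
  let ?u = "\<Gamma> *\<^sub>R (z + s *\<^sub>R axis j 1)"
  have "\<Gamma> *\<^sub>R z = ?u - (\<Gamma> * s) *\<^sub>R axis j 1" by (simp add: algebra_simps)
  then have "norm (\<Gamma> *\<^sub>R z) \<le> norm ?u + norm ((\<Gamma> * s) *\<^sub>R axis j (1::real))"
    by (metis norm_triangle_ineq4)
  also have "norm ((\<Gamma> * s) *\<^sub>R axis j (1::real)) = \<bar>\<Gamma>\<bar> * \<bar>s\<bar>" by (simp add: abs_mult)
  also have "\<bar>\<Gamma>\<bar> * \<bar>s\<bar> \<le> \<bar>\<Gamma>\<bar>" using assms by (simp add: mult_left_le)
  finally have "norm (\<Gamma> *\<^sub>R z) \<le> norm ?u + \<bar>\<Gamma>\<bar>" by simp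
  moreover have "0 \<le> \<bar>\<Gamma>\<bar> * norm ?u" by simp
  moreover have "(1 + \<bar>\<Gamma>\<bar>) * (1 + norm ?u) = 1 + norm ?u + \<bar>\<Gamma>\<bar> + \<bar>\<Gamma>\<bar> * norm ?u"
    by (simp only: algebra_simps)
  ultimately show ?thesis by linarith
qed

lemma term_hasderiv:
  fixes \<kappa> :: "real^'m \<Rightarrow> complex"
  assumes sk: "schwartz \<kappa>" and G0: "\<Gamma> \<noteq> 0"
    and v: "v \<in> borel_measurable lborel" and B: "AE y in lborel. norm (v y) \<le> B"
  shows "((\<lambda>t. LINT y|lborel. v y * pdl js (chiS \<Gamma> \<kappa>) (x + t *\<^sub>R axis j 1 - y)) has_vector_derivative
          (LINT y|lborel. v y * pdl (j # js) (chiS \<Gamma> \<kappa>) (x - y))) (at 0)"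
proof -
  define p where "p = 2 * CARD('m)"
  obtain K where K: "K \<ge> 0" "\<And>u. norm (pdl (j # j # js) \<kappa> u) \<le> K / (1 + norm u) ^ p"
    using schwartz_decay[OF sk] by blast
  define c2 where "c2 = \<bar>\<Gamma>\<bar> ^ CARD('m) * \<bar>\<Gamma>\<bar> ^ (length js + 2)"
  define H where "H z = c2 * K * (1 + \<bar>\<Gamma>\<bar>) ^ p * (1 / (1 + norm (\<Gamma> *\<^sub>R z)) ^ p)" for z :: "real^'m"
  show ?thesis
  proof (rule conv_has_vderiv[OF v B, where ?g2.0="pdl (j # j # js) (chiS \<Gamma> \<kappa>)" and H=H])
    show "integrable lborel (pdl js (chiS \<Gamma> \<kappa>))" by (rule chiS_integrable[OF sk G0])
    show "integrable lborel (pdl (j # js) (chiS \<Gamma> \<kappa>))" by (rule chiS_integrable[OF sk G0])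
    show "((\<lambda>t. pdl js (chiS \<Gamma> \<kappa>) (z + t *\<^sub>R axis j 1)) has_vector_derivative pdl (j # js) (chiS \<Gamma> \<kappa>) (z + s *\<^sub>R axis j 1)) (at s)"
      for z s
      using scaled_deriv[OF sk, of "\<Gamma> ^ CARD('m) * \<Gamma> ^ length js" js \<Gamma> z j s]
      unfolding pdl_chiS[OF sk] by (simp add: mult_ac)
    show "((\<lambda>t. pdl (j # js) (chiS \<Gamma> \<kappa>) (z + t *\<^sub>R axis j 1)) has_vector_derivative pdl (j # j # js) (chiS \<Gamma> \<kappa>) (z + s *\<^sub>R axis j 1)) (at s)"
      for z s
      using scaled_deriv[OF sk, of "\<Gamma> ^ CARD('m) * \<Gamma> ^ length (j # js)" "j # js" \<Gamma> z j s]
      unfolding pdl_chiS[OF sk] by (simp add: mult_ac)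
    show "integrable lborel H"
    proof -
      have "integrable lborel (\<lambda>z::real^'m. 1 / (1 + norm (0 + \<Gamma> *\<^sub>R z)) ^ p)"
        unfolding p_def by (rule integrable_affine_eucl[OF integrable_decay_m G0])
      from integrable_mult_right[OF this, of "c2 * K * (1 + \<bar>\<Gamma>\<bar>) ^ p"]
      show ?thesis unfolding H_def by simp
    qed
    show "norm (pdl (j # j # js) (chiS \<Gamma> \<kappa>) (z + s *\<^sub>R axis j 1)) \<le> H z" if s: "\<bar>s\<bar> \<le> 1" for z s
    proof -
      let ?u = "\<Gamma> *\<^sub>R (z + s *\<^sub>R axis j 1)"
      have n: "norm (pdl (j # j # js) (chiS \<Gamma> \<kappa>) (z + s *\<^sub>R axis j 1)) = c2 * norm (pdl (j # j # js) \<kappa> ?u)"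
        unfolding pdl_chiS[OF sk] c2_def by (simp add: norm_mult norm_power power_abs)
      have c2: "0 \<le> c2" unfolding c2_def by simp
      have pe: "(1 + norm (\<Gamma> *\<^sub>R z)) ^ p \<le> ((1 + \<bar>\<Gamma>\<bar>) * (1 + norm ?u)) ^ p"
        by (rule power_mono[OF peetre[OF s]]) simp
      have "K / (1 + norm ?u) ^ p \<le> K * (1 + \<bar>\<Gamma>\<bar>) ^ p * (1 / (1 + norm (\<Gamma> *\<^sub>R z)) ^ p)"
      proof -
        have pos1: "0 < (1 + norm ?u) ^ p" by (simp add: add_pos_nonneg)
        have pos2: "0 < (1 + norm (\<Gamma> *\<^sub>R z)) ^ p" by (simp add: add_pos_nonneg)
        have "K * (1 + norm (\<Gamma> *\<^sub>R z)) ^ p \<le> K * ((1 + \<bar>\<Gamma>\<bar>) ^ p * (1 + norm ?u) ^ p)"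
          using pe K(1) by (simp add: mult_left_mono power_mult_distrib)
        then show ?thesis using pos1 pos2 by (simp add: field_simps)
      qed
      then have "norm (pdl (j # j # js) \<kappa> ?u) \<le> K * (1 + \<bar>\<Gamma>\<bar>) ^ p * (1 / (1 + norm (\<Gamma> *\<^sub>R z)) ^ p)"
        using K(2)[of ?u] by linarith
      from mult_left_mono[OF this c2]
      show ?thesis unfolding n H_def by (simp only: mult.assoc)
    qed
  qed
qed



section \<open>The scaling and l(phi)\<close>

definition fsc :: "real \<Rightarrow> (real \<Rightarrow> complex) \<Rightarrow> real \<Rightarrow> complex" where
  "fsc \<epsilon> f t = complex_of_real (1 / \<epsilon>) * f (t / \<epsilon>)"

lemma tensor_scale:
  fixes f :: "real \<Rightarrow> complex"
  shows "Defs.scale \<epsilon> (tensor f :: real^'m \<Rightarrow> complex) = tensor (fsc \<epsilon> f)"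
proof
  fix x :: "real^'m"
  have "tensor (fsc \<epsilon> f) x = (\<Prod>i\<in>UNIV. complex_of_real (1 / \<epsilon>) * f (x $ i / \<epsilon>))"
    by (simp add: tensor_def fsc_def)
  also have "\<dots> = complex_of_real (1 / \<epsilon>) ^ CARD('m) * (\<Prod>i\<in>UNIV. f (x $ i / \<epsilon>))"
    by (simp only: prod.distrib prod_constant)
  finally show "Defs.scale \<epsilon> (tensor f) x = tensor (fsc \<epsilon> f) x"
    by (simp add: scale_def tensor_def divide_inverse power_inverse mult.commute)
qed

lemma smooth1_scale:
  assumes "smooth1 f" "\<epsilon> > 0"
  shows "smooth1 (fsc \<epsilon> f)"
proof -
  obtain D where D0: "D 0 = f" and D: "\<And>n t. (D n has_vector_derivative D (Suc n) t) (at t)"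
    using assms(1) unfolding smooth1_def by blast
  define D' where "D' n t = complex_of_real ((1 / \<epsilon>) ^ Suc n) * D n (t / \<epsilon>)" for n t
  have "D' 0 = fsc \<epsilon> f" by (simp add: fun_eq_iff D'_def fsc_def D0)
  moreover have "(D' n has_vector_derivative D' (Suc n) t) (at t)" for n t
  proof -
    have d1: "((\<lambda>t. t / \<epsilon>) has_vector_derivative (1 / \<epsilon>)) (at t)"
      by (auto intro!: derivative_eq_intros)
    have "((D n \<circ> (\<lambda>t. t / \<epsilon>)) has_vector_derivative (1 / \<epsilon>) *\<^sub>R D (Suc n) (t / \<epsilon>)) (at t)"
      by (rule vector_diff_chain_at[OF d1 D])
    from has_vector_derivative_mult_right[OF this, of "complex_of_real ((1 / \<epsilon>) ^ Suc n)"]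
    show ?thesis unfolding D'_def by (simp add: o_def scaleR_conv_of_real mult_ac)
  qed
  ultimately show ?thesis unfolding smooth1_def by blast
qed

lemma smooth1_cont:
  assumes "smooth1 f" shows "continuous_on UNIV f"
proof -
  obtain D where D0: "D 0 = f" and D: "\<And>n t. (D n has_vector_derivative D (Suc n) t) (at t)"
    using assms(1) unfolding smooth1_def by blast
  show ?thesis unfolding D0[symmetric]
    by (intro continuous_at_imp_continuous_on ballI has_vector_derivative_continuous[OF D])
qed

lemma testfun1_scale:
  assumes "testfun1 f" "\<epsilon> > 0"
  shows "testfun1 (fsc \<epsilon> f)"
proof -
  have sm: "smooth1 (fsc \<epsilon> f)" using assms smooth1_scale by (auto simp: testfun1_def)
  let ?S = "{t. f t \<noteq> 0}"
  have K: "compact (closure ?S)" using assms by (simp add: testfun1_def)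
  have "compact ((\<lambda>s. \<epsilon> * s) ` closure ?S)"
    by (intro compact_continuous_image K continuous_intros)
  then have cl: "closed ((\<lambda>s. \<epsilon> * s) ` closure ?S)" by (rule compact_imp_closed)
  have "{t. fsc \<epsilon> f t \<noteq> 0} \<subseteq> (\<lambda>s. \<epsilon> * s) ` closure ?S"
  proof
    fix t assume "t \<in> {t. fsc \<epsilon> f t \<noteq> 0}"
    then have "f (t / \<epsilon>) \<noteq> 0" by (simp add: fsc_def)
    then have m: "t / \<epsilon> \<in> closure ?S" using closure_subset[of ?S] by auto
    have "t = \<epsilon> * (t / \<epsilon>)" using assms(2) by simp
    then show "t \<in> (\<lambda>s. \<epsilon> * s) ` closure ?S" using m by (rule image_eqI)
  qed
  then have sub: "closure {t. fsc \<epsilon> f t \<noteq> 0} \<subseteq> (\<lambda>s. \<epsilon> * s) ` closure ?S"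
    by (rule closure_minimal[OF _ cl])
  have "compact ((\<lambda>s. \<epsilon> * s) ` closure ?S \<inter> closure {t. fsc \<epsilon> f t \<noteq> 0})"
    by (rule compact_Int_closed[OF \<open>compact ((\<lambda>s. \<epsilon> * s) ` closure ?S)\<close>]) simp
  also have "(\<lambda>s. \<epsilon> * s) ` closure ?S \<inter> closure {t. fsc \<epsilon> f t \<noteq> 0} = closure {t. fsc \<epsilon> f t \<noteq> 0}"
    using sub by (rule Int_absorb1)
  finally show ?thesis using sm by (simp add: testfun1_def)
qed

lemma A1_scale:
  assumes "f \<in> A1 q" "\<epsilon> > 0"
  shows "fsc \<epsilon> f \<in> A1 0"
proof -
  have tf: "testfun1 f" and I: "(LINT t|lborel. f t) = 1" using assms by (auto simp: A1_def)
  have "(LINT t|lborel. fsc \<epsilon> f t) = \<bar>\<epsilon>\<bar> *\<^sub>R (LINT x|lborel. fsc \<epsilon> f (0 + \<epsilon> * x))"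
    using assms(2) by (intro lborel_integral_real_affine) simp
  also have "\<dots> = 1"
    using assms(2) I by (simp add: fsc_def scaleR_conv_of_real)
  finally show ?thesis using testfun1_scale[OF tf assms(2)] by (simp add: A1_def)
qed

lemma A1_nonzero:
  assumes "f \<in> A1 q" shows "\<exists>t. f t \<noteq> 0"
proof (rule ccontr)
  assume "\<not> (\<exists>t. f t \<noteq> 0)"
  then have "f = (\<lambda>_. 0)" by auto
  then show False using assms by (simp add: A1_def)
qed

lemma tensor_inj:
  fixes f g :: "real \<Rightarrow> complex"
  assumes f: "f \<in> A1 q" and g: "g \<in> A1 q'" and eq: "(tensor f :: real^'m \<Rightarrow> complex) = tensor g"
  shows "f = g"
proof -
  obtain a where a: "f a \<noteq> 0" using A1_nonzero[OF f] by blast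
  obtain i0 :: 'm where True by blast
  define P where "P = f a ^ (CARD('m) - 1)"
  define Q where "Q = g a ^ (CARD('m) - 1)"
  have prodeq: "tensor h (\<chi> i. if i = i0 then t else a) = h t * h a ^ (CARD('m) - 1)" for h :: "real \<Rightarrow> complex" and t
  proof -
    have "tensor h (\<chi> i. if i = i0 then t else a) = (\<Prod>i\<in>UNIV. h (if i = i0 then t else a))"
      by (simp add: tensor_def)
    also have "\<dots> = h t * (\<Prod>i\<in>UNIV - {i0}. h (if i = i0 then t else a))"
      by (subst prod.remove[of UNIV i0]) auto
    also have "(\<Prod>i\<in>UNIV - {i0}. h (if i = i0 then t else a)) = (\<Prod>i\<in>UNIV - {i0}. h a)"
      by (intro prod.cong) auto
    also have "\<dots> = h a ^ (CARD('m) - 1)" by (simp add: card_Diff_singleton)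
    finally show ?thesis .
  qed
  have pt: "f t * P = g t * Q" for t
    using prodeq[of f t] prodeq[of g t] eq unfolding P_def Q_def by metis
  have "(LINT t|lborel. f t * P) = (LINT t|lborel. g t * Q)" using pt by simp
  then have "P = Q" using f g by (simp add: A1_def)
  moreover have "P \<noteq> 0" using a by (simp add: P_def)
  ultimately show ?thesis using pt by (auto simp: fun_eq_iff)
qed

lemma lm_scale:
  assumes f: "f \<in> A1 q" and e: "\<epsilon> > 0"
  shows "lm (Defs.scale \<epsilon> (tensor f :: real^'m \<Rightarrow> complex)) = lsupp (fsc \<epsilon> f)"
proof -
  have "(THE g. g \<in> A1 0 \<and> (tensor g :: real^'m \<Rightarrow> complex) = Defs.scale \<epsilon> (tensor f)) = fsc \<epsilon> f"
  proof (rule the_equality)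
    show "fsc \<epsilon> f \<in> A1 0 \<and> (tensor (fsc \<epsilon> f) :: real^'m \<Rightarrow> complex) = Defs.scale \<epsilon> (tensor f)"
      using A1_scale[OF f e] tensor_scale by metis
    show "g = fsc \<epsilon> f" if "g \<in> A1 0 \<and> (tensor g :: real^'m \<Rightarrow> complex) = Defs.scale \<epsilon> (tensor f)" for g
      using that tensor_inj[OF _ A1_scale[OF f e], where 'm='m] tensor_scale[of \<epsilon> f, where 'm='m] by metis
  qed
  then show ?thesis by (simp add: lm_def)
qed

lemma lsupp_props:
  assumes f: "f \<in> A1 q"
  shows "{\<bar>t\<bar> | t. f t \<noteq> 0} \<noteq> {}" "bdd_above {\<bar>t\<bar> | t. f t \<noteq> 0}" "0 < lsupp f"
proof -
  let ?S = "{\<bar>t\<bar> | t. f t \<noteq> 0}"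
  have tf: "testfun1 f" using f by (simp add: A1_def)
  obtain t0 where t0: "f t0 \<noteq> 0" using A1_nonzero[OF f] by blast
  then show ne: "?S \<noteq> {}" by blast
  have "bounded (closure {t. f t \<noteq> 0})" using tf by (simp add: testfun1_def compact_imp_bounded)
  then obtain M where M: "\<And>t. t \<in> closure {t. f t \<noteq> 0} \<Longrightarrow> norm t \<le> M" by (auto simp: bounded_iff)
  show bdd: "bdd_above ?S"
  proof (rule bdd_aboveI[of _ M])
    fix r assume "r \<in> ?S"
    then obtain t where t: "r = \<bar>t\<bar>" "f t \<noteq> 0" by blast
    then have "t \<in> closure {t. f t \<noteq> 0}" using closure_subset[of "{t. f t \<noteq> 0}"] by auto
    then show "r \<le> M" using M t by simp
  qed
  have cont: "isCont f t0"
    using smooth1_cont[of f] tf by (simp add: testfun1_def continuous_on_eq_continuous_at)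
  obtain e where e: "e > 0" "\<And>y. dist t0 y < e \<Longrightarrow> f y \<noteq> 0"
    using continuous_at_avoid[OF cont t0] by blast
  define y where "y = (if t0 = 0 then e / 2 else t0)"
  have "f y \<noteq> 0" "y \<noteq> 0"
    using e t0 by (auto simp: y_def dist_real_def)
  then have mem: "\<bar>y\<bar> \<in> ?S" and pos: "0 < \<bar>y\<bar>" by auto
  have "\<bar>y\<bar> \<le> Sup ?S" by (rule cSup_upper[OF mem bdd])
  then show "0 < lsupp f"
    unfolding lsupp_def using pos by linarith
qed

lemma lsupp_fsc:
  assumes f: "f \<in> A1 q" and e: "\<epsilon> > 0"
  shows "lsupp (fsc \<epsilon> f) = \<epsilon> * lsupp f"
proof -
  let ?S = "{\<bar>t\<bar> | t. f t \<noteq> 0}"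
  have "{\<bar>t\<bar> | t. fsc \<epsilon> f t \<noteq> 0} = (\<lambda>r. \<epsilon> * r) ` ?S"
  proof (intro set_eqI iffI)
    fix r assume "r \<in> {\<bar>t\<bar> | t. fsc \<epsilon> f t \<noteq> 0}"
    then obtain t where t1: "r = \<bar>t\<bar>" and t2: "fsc \<epsilon> f t \<noteq> 0" by blast
    from t2 have ft: "f (t / \<epsilon>) \<noteq> 0" by (simp add: fsc_def)
    have mem: "\<bar>t / \<epsilon>\<bar> \<in> ?S" using ft by blast
    have "r = \<epsilon> * \<bar>t / \<epsilon>\<bar>" using e t1 by (simp add: abs_divide)
    then show "r \<in> (\<lambda>r. \<epsilon> * r) ` ?S" using mem by (rule image_eqI)
  next
    fix r assume "r \<in> (\<lambda>r. \<epsilon> * r) ` ?S"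
    then obtain x where x1: "r = \<epsilon> * x" and x2: "x \<in> ?S" by blast
    from x2 obtain s where s1: "x = \<bar>s\<bar>" and s2: "f s \<noteq> 0" by blast
    have "fsc \<epsilon> f (\<epsilon> * s) \<noteq> 0" using e s2 by (simp add: fsc_def)
    moreover have "r = \<bar>\<epsilon> * s\<bar>" using e x1 s1 by (simp add: abs_mult)
    ultimately show "r \<in> {\<bar>t\<bar> | t. fsc \<epsilon> f t \<noteq> 0}" by blast
  qed
  moreover have "\<epsilon> * Sup ?S = Sup ((\<lambda>r. \<epsilon> * r) ` ?S)"
  proof (rule continuous_at_Sup_mono)
    show "mono ((*) \<epsilon>)" using e by (simp add: mono_def mult_left_mono)
    show "continuous (at_left (Sup ?S)) ((*) \<epsilon>)"
      by (rule continuous_mult[OF continuous_const continuous_ident])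
    show "?S \<noteq> {}" "bdd_above ?S" using lsupp_props[OF f] by auto
  qed
  ultimately show ?thesis by (simp add: lsupp_def)
qed

lemma lm_Am:
  assumes "\<phi> \<in> (Am N :: (real^'m \<Rightarrow> complex) set)"
  shows "\<exists>C>0. \<forall>\<epsilon>>0. lm (Defs.scale \<epsilon> \<phi>) = C * \<epsilon>"
proof -
  obtain f where f: "f \<in> A1 N" and \<phi>: "\<phi> = tensor f" using assms unfolding Am_def by blast
  show ?thesis
  proof (intro exI[of _ "lsupp f"] conjI allI impI)
    show "0 < lsupp f" by (rule lsupp_props(3)[OF f])
    fix \<epsilon> :: real assume e: "\<epsilon> > 0"
    show "lm (Defs.scale \<epsilon> \<phi>) = lsupp f * \<epsilon>"
      unfolding \<phi> lm_scale[OF f e, where 'm='m] lsupp_fsc[OF f e] by (simp add: mult.commute)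
  qed
qed



definition Bv :: "('a \<Rightarrow> real^'m \<Rightarrow> complex) \<Rightarrow> 'a \<Rightarrow> real" where
  "Bv v js = (SOME C. AE y in lborel. norm (v js y) \<le> C)"

lemma Linf_Bv:
  assumes "Linf (v js)"
  shows "v js \<in> borel_measurable lborel" "AE y in lborel. norm (v js y) \<le> Bv v js" "0 \<le> Bv v js"
proof -
  show "v js \<in> borel_measurable lborel" using assms by (simp add: Linf_def)
  have "\<exists>C. AE y in lborel. norm (v js y) \<le> C" using assms by (simp add: Linf_def)
  then show B: "AE y in lborel. norm (v js y) \<le> Bv v js" unfolding Bv_def by (rule someI_ex)
  show "0 \<le> Bv v js" by (rule AE_bound_nonneg[OF B])
qed

lemma finite_lists_le: "finite {js :: 'm::finite list. length js \<le> k}"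
  using finite_lists_length_le[of "UNIV :: 'm set" k] by simp

definition Iint :: "(real^'m \<Rightarrow> complex) \<Rightarrow> 'm list \<Rightarrow> real" where
  "Iint \<kappa> js = (LINT y|lborel. norm (pdl js \<kappa> y))"

lemma Iint_nonneg: "0 \<le> Iint \<kappa> js"
  unfolding Iint_def by (rule integral_nonneg_AE) simp

lemma embW_eq:
  "emb_W \<gamma> \<kappa> k v \<phi> x = (\<Sum>js\<in>{js. length js \<le> k}. LINT y|lborel. v js y * pdl js (chiS (\<gamma> (lm \<phi>)) \<kappa>) (x - y))"
  by (simp add: emb_W_def chi_gamma_chiS)

lemma embLinf_eq: "emb_Linf \<gamma> \<kappa> u \<phi> x = emb_W \<gamma> \<kappa> 0 (\<lambda>_. u) \<phi> x"
proof -
  have "{js :: 'a list. length js \<le> 0} = {[]}" by auto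
  then show ?thesis by (simp add: emb_W_def emb_Linf_def)
qed

lemma pow_le_max:
  fixes \<Gamma> :: real
  assumes "n \<le> k"
  shows "\<bar>\<Gamma>\<bar> ^ n \<le> max 1 \<bar>\<Gamma>\<bar> ^ k"
proof -
  have "\<bar>\<Gamma>\<bar> ^ n \<le> max 1 \<bar>\<Gamma>\<bar> ^ n" by (rule power_mono) auto
  also have "\<dots> \<le> max 1 \<bar>\<Gamma>\<bar> ^ k" by (rule power_increasing[OF assms]) simp
  finally show ?thesis .
qed

lemma embW_bound:
  fixes \<kappa> :: "real^'m \<Rightarrow> complex" and v :: "'m list \<Rightarrow> real^'m \<Rightarrow> complex"
  assumes sk: "schwartz \<kappa>" and L: "\<forall>js. length js \<le> k \<longrightarrow> Linf (v js)"
    and G0: "\<gamma> (lm \<phi>) \<noteq> 0"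
  shows "norm (emb_W \<gamma> \<kappa> k v \<phi> x) \<le> (\<Sum>js\<in>{js. length js \<le> k}. Bv v js * Iint \<kappa> js) * max 1 \<bar>\<gamma> (lm \<phi>)\<bar> ^ k"
proof -
  let ?\<Gamma> = "\<gamma> (lm \<phi>)"
  have "norm (emb_W \<gamma> \<kappa> k v \<phi> x) \<le> (\<Sum>js\<in>{js. length js \<le> k}. norm (LINT y|lborel. v js y * pdl js (chiS ?\<Gamma> \<kappa>) (x - y)))"
    unfolding embW_eq by (rule norm_sum)
  also have "\<dots> \<le> (\<Sum>js\<in>{js. length js \<le> k}. Bv v js * Iint \<kappa> js * max 1 \<bar>?\<Gamma>\<bar> ^ k)"
  proof (rule sum_mono)
    fix js :: "'m list" assume "js \<in> {js. length js \<le> k}"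
    then have l: "length js \<le> k" by simp
    note LB = Linf_Bv[where v=v and js=js, OF L[rule_format, OF l]]
    have "norm (LINT y|lborel. v js y * pdl js (chiS ?\<Gamma> \<kappa>) (x - y)) \<le> Bv v js * (\<bar>?\<Gamma>\<bar> ^ length js * Iint \<kappa> js)"
      unfolding Iint_def by (rule term_bound[OF sk G0 LB(1,2)])
    also have "\<dots> \<le> Bv v js * (max 1 \<bar>?\<Gamma>\<bar> ^ k * Iint \<kappa> js)"
      by (intro mult_left_mono mult_right_mono pow_le_max l Iint_nonneg LB(3))
    finally show "norm (LINT y|lborel. v js y * pdl js (chiS ?\<Gamma> \<kappa>) (x - y)) \<le> Bv v js * Iint \<kappa> js * max 1 \<bar>?\<Gamma>\<bar> ^ k"
      by (simp add: mult_ac)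
  qed
  also have "\<dots> = (\<Sum>js\<in>{js. length js \<le> k}. Bv v js * Iint \<kappa> js) * max 1 \<bar>?\<Gamma>\<bar> ^ k"
    by (simp add: sum_distrib_right)
  finally show ?thesis .
qed

lemma embW_pd:
  fixes \<kappa> :: "real^'m \<Rightarrow> complex" and v :: "'m list \<Rightarrow> real^'m \<Rightarrow> complex"
  assumes sk: "schwartz \<kappa>" and L: "\<forall>js. length js \<le> k \<longrightarrow> Linf (v js)"
    and G0: "\<gamma> (lm \<phi>) \<noteq> 0"
  shows "pd j (emb_W \<gamma> \<kappa> k v \<phi>) x =
    (\<Sum>js\<in>{js. length js \<le> k}. LINT y|lborel. v js y * pdl (j # js) (chiS (\<gamma> (lm \<phi>)) \<kappa>) (x - y))"
proof -
  let ?\<Gamma> = "\<gamma> (lm \<phi>)"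
  have "((\<lambda>t. emb_W \<gamma> \<kappa> k v \<phi> (x + t *\<^sub>R axis j 1)) has_vector_derivative
      (\<Sum>js\<in>{js. length js \<le> k}. LINT y|lborel. v js y * pdl (j # js) (chiS ?\<Gamma> \<kappa>) (x - y))) (at 0)"
    unfolding embW_eq
  proof (rule has_vector_derivative_sum)
    fix js :: "'m list" assume "js \<in> {js. length js \<le> k}"
    then have l: "length js \<le> k" by simp
    note LB = Linf_Bv[where v=v and js=js, OF L[rule_format, OF l]]
    show "((\<lambda>t. LINT y|lborel. v js y * pdl js (chiS ?\<Gamma> \<kappa>) (x + t *\<^sub>R axis j 1 - y)) has_vector_derivative
        (LINT y|lborel. v js y * pdl (j # js) (chiS ?\<Gamma> \<kappa>) (x - y))) (at 0)"
      by (rule term_hasderiv[OF sk G0 LB(1,2)])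
  qed
  then show ?thesis unfolding pd_def by (rule vector_derivative_at)
qed

lemma embW_pd_bound:
  fixes \<kappa> :: "real^'m \<Rightarrow> complex" and v :: "'m list \<Rightarrow> real^'m \<Rightarrow> complex"
  assumes sk: "schwartz \<kappa>" and L: "\<forall>js. length js \<le> k \<longrightarrow> Linf (v js)"
    and G0: "\<gamma> (lm \<phi>) \<noteq> 0"
  shows "norm (pd j (emb_W \<gamma> \<kappa> k v \<phi>) x) \<le> (\<Sum>js\<in>{js. length js \<le> k}. Bv v js * Iint \<kappa> (j # js)) * max 1 \<bar>\<gamma> (lm \<phi>)\<bar> ^ Suc k"
proof -
  let ?\<Gamma> = "\<gamma> (lm \<phi>)"
  have "norm (pd j (emb_W \<gamma> \<kappa> k v \<phi>) x) \<le> (\<Sum>js\<in>{js. length js \<le> k}. norm (LINT y|lborel. v js y * pdl (j # js) (chiS ?\<Gamma> \<kappa>) (x - y)))"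
    unfolding embW_pd[where v=v and \<gamma>=\<gamma> and \<phi>=\<phi> and k=k, OF sk L G0] by (rule norm_sum)
  also have "\<dots> \<le> (\<Sum>js\<in>{js. length js \<le> k}. Bv v js * Iint \<kappa> (j # js) * max 1 \<bar>?\<Gamma>\<bar> ^ Suc k)"
  proof (rule sum_mono)
    fix js :: "'m list" assume "js \<in> {js. length js \<le> k}"
    then have l: "length js \<le> k" by simp
    note LB = Linf_Bv[where v=v and js=js, OF L[rule_format, OF l]]
    have "norm (LINT y|lborel. v js y * pdl (j # js) (chiS ?\<Gamma> \<kappa>) (x - y)) \<le> Bv v js * (\<bar>?\<Gamma>\<bar> ^ length (j # js) * Iint \<kappa> (j # js))"
      unfolding Iint_def by (rule term_bound[OF sk G0 LB(1,2)])
    also have "\<dots> \<le> Bv v js * (max 1 \<bar>?\<Gamma>\<bar> ^ Suc k * Iint \<kappa> (j # js))"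
      using l by (intro mult_left_mono mult_right_mono pow_le_max Iint_nonneg LB(3)) simp_all
    finally show "norm (LINT y|lborel. v js y * pdl (j # js) (chiS ?\<Gamma> \<kappa>) (x - y)) \<le> Bv v js * Iint \<kappa> (j # js) * max 1 \<bar>?\<Gamma>\<bar> ^ Suc k"
      by (simp add: mult_ac)
  qed
  also have "\<dots> = (\<Sum>js\<in>{js. length js \<le> k}. Bv v js * Iint \<kappa> (j # js)) * max 1 \<bar>?\<Gamma>\<bar> ^ Suc k"
    by (simp add: sum_distrib_right)
  finally show ?thesis .
qed



lemma rho_typeI:
  fixes U :: "(real^'m \<Rightarrow> complex) \<Rightarrow> real^'m \<Rightarrow> complex" and \<gamma> \<rho> :: "real \<Rightarrow> real"
  assumes bound: "\<And>\<phi> y. 1 \<le> \<gamma> (lm \<phi>) \<Longrightarrow> norm (U \<phi> y) \<le> A * \<gamma> (lm \<phi>) ^ n"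
  and ev: "\<And>C. C > 0 \<Longrightarrow> \<exists>\<eta>. 0 < \<eta> \<and> \<eta> < 1 \<and> (\<forall>\<epsilon>. 0 < \<epsilon> \<and> \<epsilon> < \<eta> \<longrightarrow> 1 \<le> \<gamma> (C * \<epsilon>) \<and> \<gamma> (C * \<epsilon>) ^ n \<le> \<rho> (C * \<epsilon>))"
  shows "rho_type \<rho> U"
proof -
  define N where "N = nat \<lceil>A\<rceil>"
  have AN: "A \<le> real N" unfolding N_def by linarith
  show ?thesis unfolding rho_type_def
  proof (intro exI[of _ N] ballI)
    fix \<phi> :: "real^'m \<Rightarrow> complex" assume \<phi>: "\<phi> \<in> Am N"
    obtain C where C: "C > 0" "\<And>\<epsilon>. \<epsilon> > 0 \<Longrightarrow> lm (Defs.scale \<epsilon> \<phi>) = C * \<epsilon>"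
      using lm_Am[OF \<phi>] by blast
    obtain \<eta> where \<eta>: "0 < \<eta>" "\<eta> < 1"
      "\<And>\<epsilon>. 0 < \<epsilon> \<Longrightarrow> \<epsilon> < \<eta> \<Longrightarrow> 1 \<le> \<gamma> (C * \<epsilon>) \<and> \<gamma> (C * \<epsilon>) ^ n \<le> \<rho> (C * \<epsilon>)"
      using ev[OF C(1)] by blast
    show "\<exists>C>0. \<exists>\<eta>. 0 < \<eta> \<and> \<eta> < 1 \<and> (\<forall>\<epsilon>. 0 < \<epsilon> \<and> \<epsilon> < \<eta> \<longrightarrow> (\<forall>y. norm (U (Defs.scale \<epsilon> \<phi>) y) \<le> real N * \<rho> (C * \<epsilon>)))"
    proof -
    have "\<forall>\<epsilon>. 0 < \<epsilon> \<and> \<epsilon> < \<eta> \<longrightarrow> (\<forall>y. norm (U (Defs.scale \<epsilon> \<phi>) y) \<le> real N * \<rho> (C * \<epsilon>))"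
    proof (intro allI impI)
      fix \<epsilon> y assume e: "0 < \<epsilon> \<and> \<epsilon> < \<eta>"
      have l: "lm (Defs.scale \<epsilon> \<phi>) = C * \<epsilon>" using C(2) e by simp
      have g1: "1 \<le> \<gamma> (C * \<epsilon>)" and gr: "\<gamma> (C * \<epsilon>) ^ n \<le> \<rho> (C * \<epsilon>)" using \<eta>(3) e by auto
      have gp: "0 \<le> \<gamma> (C * \<epsilon>) ^ n" using g1 by simp
      have "norm (U (Defs.scale \<epsilon> \<phi>) y) \<le> A * \<gamma> (C * \<epsilon>) ^ n" using bound[of "Defs.scale \<epsilon> \<phi>" y] l g1 by simp
      also have "\<dots> \<le> real N * \<gamma> (C * \<epsilon>) ^ n" by (rule mult_right_mono[OF AN gp])
      also have "\<dots> \<le> real N * \<rho> (C * \<epsilon>)" by (rule mult_left_mono[OF gr]) simp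
      finally show "norm (U (Defs.scale \<epsilon> \<phi>) y) \<le> real N * \<rho> (C * \<epsilon>)" .
    qed
    then show ?thesis using C(1) \<eta>(1,2) by blast
    qed
  qed
qed

lemma bounded_typeI:
  fixes U :: "(real^'m \<Rightarrow> complex) \<Rightarrow> real^'m \<Rightarrow> complex" and \<gamma> :: "real \<Rightarrow> real"
  assumes bound: "\<And>\<phi> y. 1 \<le> \<gamma> (lm \<phi>) \<Longrightarrow> norm (U \<phi> y) \<le> A"
  and ev: "\<And>C. C > 0 \<Longrightarrow> \<exists>\<eta>. 0 < \<eta> \<and> \<eta> < 1 \<and> (\<forall>\<epsilon>. 0 < \<epsilon> \<and> \<epsilon> < \<eta> \<longrightarrow> 1 \<le> \<gamma> (C * \<epsilon>))"
  shows "bounded_type U"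
proof -
  have main: "\<exists>C>0. \<exists>\<eta>>0. \<forall>\<epsilon>. 0 < \<epsilon> \<and> \<epsilon> < \<eta> \<longrightarrow> (\<forall>y. norm (U (Defs.scale \<epsilon> \<phi>) y) \<le> C)"
    if \<phi>: "\<phi> \<in> Am 0" for \<phi> :: "real^'m \<Rightarrow> complex"
  proof -
  obtain C where C: "C > 0" "\<And>\<epsilon>. \<epsilon> > 0 \<Longrightarrow> lm (Defs.scale \<epsilon> \<phi>) = C * \<epsilon>"
    using lm_Am[OF \<phi>] by blast
  obtain \<eta> where \<eta>: "0 < \<eta>" "\<And>\<epsilon>. 0 < \<epsilon> \<Longrightarrow> \<epsilon> < \<eta> \<Longrightarrow> 1 \<le> \<gamma> (C * \<epsilon>)"
    using ev[OF C(1)] by blast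
  have "\<forall>\<epsilon>. 0 < \<epsilon> \<and> \<epsilon> < \<eta> \<longrightarrow> (\<forall>y. norm (U (Defs.scale \<epsilon> \<phi>) y) \<le> max A 1)"
  proof (intro allI impI)
    fix \<epsilon> y assume e: "0 < \<epsilon> \<and> \<epsilon> < \<eta>"
    have "1 \<le> \<gamma> (lm (Defs.scale \<epsilon> \<phi>))" using C(2) \<eta>(2) e by simp
    then have "norm (U (Defs.scale \<epsilon> \<phi>) y) \<le> A" by (rule bound)
    then show "norm (U (Defs.scale \<epsilon> \<phi>) y) \<le> max A 1" by simp
  qed
  moreover have "0 < max A 1" by simp
  ultimately show ?thesis using \<eta>(1) by blast
  qed
  show ?thesis unfolding bounded_type_def using main by blast
qed

lemma ev_at_right:
  assumes "eventually P (at_right (0::real))" "C > 0"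
  shows "\<exists>\<eta>. 0 < \<eta> \<and> \<eta> < 1 \<and> (\<forall>\<epsilon>. 0 < \<epsilon> \<and> \<epsilon> < \<eta> \<longrightarrow> P (C * \<epsilon>))"
proof -
  obtain b where b: "b > 0" "\<And>y. y > 0 \<Longrightarrow> y < b \<Longrightarrow> P y"
    using assms(1) unfolding eventually_at_right_field by auto
  show ?thesis
  proof (intro exI[of _ "min (1/2) (b / C)"] conjI allI impI)
    show "0 < min (1/2) (b / C)" using b assms(2) by simp
    show "min (1/2) (b / C) < 1" by simp
    fix \<epsilon> assume e: "0 < \<epsilon> \<and> \<epsilon> < min (1/2) (b / C)"
    then have "C * \<epsilon> < b" using assms(2) by (simp add: pos_less_divide_eq mult.commute)
    moreover have "C * \<epsilon> > 0" using e assms(2) by simp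
    ultimately show "P (C * \<epsilon>)" using b by blast
  qed
qed

lemma ev_log: "eventually (\<lambda>r. 1 \<le> ln (1 / r)) (at_right (0::real))"
  by real_asymp

lemma logfun_ev:
  "C > 0 \<Longrightarrow> \<exists>\<eta>. 0 < \<eta> \<and> \<eta> < 1 \<and> (\<forall>\<epsilon>. 0 < \<epsilon> \<and> \<epsilon> < \<eta> \<longrightarrow> 1 \<le> logfun (C * \<epsilon>))"
  using ev_at_right[OF ev_log] by (simp add: logfun_def)


lemma ev_pos: "eventually (\<lambda>r. 0 < r \<and> r < 1) (at_right (0::real))"
  unfolding eventually_at_right_field by (intro exI[of _ 1]) auto

lemma lim_log: "filterlim (\<lambda>r. ln (1 / r)) at_top (at_right (0::real))"
  by real_asymp

lemma admissible_rootlog: "admissible (\<lambda>r. root (Suc k) (ln (1 / r)))"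
  unfolding admissible_def
proof (intro conjI ballI)
  show "continuous_on {0<..<1} (\<lambda>r. root (Suc k) (ln (1 / r)))"
    by (intro continuous_intros) auto
  show "0 < root (Suc k) (ln (1 / r))" if "r \<in> {0<..<1}" for r :: real
    using that by (intro real_root_gt_zero) auto
  show "(\<lambda>r. root (Suc k) (ln (1 / r))) \<in> O[at_right 0](\<lambda>r. 1 / r)"
  proof (rule bigoI[where c=1])
    show "\<forall>\<^sub>F r in at_right 0. norm (root (Suc k) (ln (1 / r))) \<le> 1 * norm (1 / r)"
      using ev_log ev_pos
    proof eventually_elim
      case (elim r)
      then have r: "0 < r" "1 \<le> ln (1 / r)" and r1: "r < 1" by auto
      have "root (Suc k) (ln (1 / r)) \<le> root (Suc 0) (ln (1 / r))"
        by (rule real_root_decreasing) (use r in auto)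
      also have "\<dots> = ln (1 / r)" by simp
      also have "\<dots> \<le> 1 / r - 1" using r by (intro ln_le_minus_one) simp
      finally have "root (Suc k) (ln (1 / r)) \<le> 1 / r" by simp
      moreover have "0 \<le> root (Suc k) (ln (1 / r))" using r(2) by (intro real_root_ge_zero) linarith
      ultimately show ?case using r by simp
    qed
  qed
  show "filterlim (\<lambda>r. root (Suc k) (ln (1 / r))) at_top (at_right 0)"
    unfolding filterlim_at_top
  proof
    fix Z :: real
    have "eventually (\<lambda>r. (max Z 1) ^ Suc k \<le> ln (1 / r)) (at_right (0::real))"
      using lim_log unfolding filterlim_at_top by blast
    then show "eventually (\<lambda>r. Z \<le> root (Suc k) (ln (1 / r))) (at_right (0::real))"
    proof eventually_elim
      case (elim r)
      have "Z \<le> max Z 1" by simp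
      also have "\<dots> = root (Suc k) ((max Z 1) ^ Suc k)"
        by (rule real_root_power_cancel[symmetric]) auto
      also have "\<dots> \<le> root (Suc k) (ln (1 / r))" using elim by simp
      finally show ?case .
    qed
  qed
  show "(\<lambda>r. root (Suc k) (ln (1 / (s * r)))) \<in> O[at_right 0](\<lambda>r. root (Suc k) (ln (1 / r)))"
    if s: "s \<in> {0<..<1}" for s :: real
  proof (rule bigoI[where c=2])
    have s0: "0 < s" "s < 1" using s by auto
    have ls: "0 < ln (1 / s)" using s0 by simp
    have "eventually (\<lambda>r. ln (1 / s) \<le> ln (1 / r)) (at_right (0::real))"
      using lim_log unfolding filterlim_at_top by blast
    then show "\<forall>\<^sub>F r in at_right 0. norm (root (Suc k) (ln (1 / (s * r)))) \<le> 2 * norm (root (Suc k) (ln (1 / r)))"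
      using ev_pos
    proof eventually_elim
      case (elim r)
      then have r: "0 < r" and L: "ln (1 / s) \<le> ln (1 / r)" by auto
      have eq: "ln (1 / (s * r)) = ln (1 / s) + ln (1 / r)"
        using s0 r by (simp add: ln_div ln_mult)
      have L0: "0 \<le> ln (1 / r)" using L ls by linarith
      have nn: "0 \<le> ln (1 / (s * r))" using eq L0 ls by linarith
      have "root (Suc k) (ln (1 / (s * r))) \<le> root (Suc k) (2 * ln (1 / r))"
        using eq L by simp
      also have "\<dots> = root (Suc k) 2 * root (Suc k) (ln (1 / r))" by (rule real_root_mult)
      also have "\<dots> \<le> 2 * root (Suc k) (ln (1 / r))"
      proof (rule mult_right_mono)
        have "root (Suc k) 2 \<le> root (Suc 0) 2" by (rule real_root_decreasing) auto
        then show "root (Suc k) 2 \<le> 2" by simp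
        show "0 \<le> root (Suc k) (ln (1 / r))" using L0 by (rule real_root_ge_zero)
      qed
      finally show ?case
        using real_root_ge_zero[OF nn, of "Suc k"] real_root_ge_zero[OF L0, of "Suc k"] by simp
    qed
  qed
qed


lemma rootlog_ev:
  assumes "C > 0" and that: "n \<le> Suc k"
  shows "\<exists>\<eta>. 0 < \<eta> \<and> \<eta> < 1 \<and> (\<forall>\<epsilon>. 0 < \<epsilon> \<and> \<epsilon> < \<eta> \<longrightarrow>
     1 \<le> root (Suc k) (ln (1 / (C * \<epsilon>))) \<and> root (Suc k) (ln (1 / (C * \<epsilon>))) ^ n \<le> logfun (C * \<epsilon>))"
proof -
  obtain \<eta> where \<eta>: "0 < \<eta>" "\<eta> < 1" "\<And>\<epsilon>. 0 < \<epsilon> \<and> \<epsilon> < \<eta> \<Longrightarrow> 1 \<le> logfun (C * \<epsilon>)"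
    using logfun_ev[OF assms(1)] by blast
  show ?thesis
  proof (intro exI[of _ \<eta>] conjI allI impI \<eta>(1,2))
    fix \<epsilon> assume e: "0 < \<epsilon> \<and> \<epsilon> < \<eta>"
    have L: "1 \<le> ln (1 / (C * \<epsilon>))" using \<eta>(3)[OF e] by (simp add: logfun_def)
    show g1: "1 \<le> root (Suc k) (ln (1 / (C * \<epsilon>)))" using L by simp
    have "root (Suc k) (ln (1 / (C * \<epsilon>))) ^ n \<le> root (Suc k) (ln (1 / (C * \<epsilon>))) ^ Suc k"
      by (rule power_increasing[OF that g1])
    also have "\<dots> = ln (1 / (C * \<epsilon>))" using L by (intro real_root_pow_pos2) auto
    finally show "root (Suc k) (ln (1 / (C * \<epsilon>))) ^ n \<le> logfun (C * \<epsilon>)" by (simp add: logfun_def)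
  qed
qed

theorem mainTheorem4:
  fixes \<kappa> :: "real^'m \<Rightarrow> complex"
  assumes "schwartz \<kappa>" and "(LINT x|lborel. \<kappa> x) = 1"
  shows
   "((\<forall>v::'m list \<Rightarrow> real^'m \<Rightarrow> complex. (\<forall>js. length js \<le> 1 \<longrightarrow> Linf (v js)) \<longrightarrow>
         rho_type logfun (emb_W logfun \<kappa> 1 v)) \<and>
     (\<forall>u. Linf u \<longrightarrow>
         bounded_type (emb_Linf logfun \<kappa> u) \<and>
         (\<forall>j. rho_type logfun (\<lambda>\<phi>. pd j (emb_Linf logfun \<kappa> u \<phi>)))))
    \<and>
    ((\<forall>\<gamma> k (v::'m list \<Rightarrow> real^'m \<Rightarrow> complex). admissible \<gamma> \<longrightarrow>
         (\<forall>js. length js \<le> k \<longrightarrow> Linf (v js)) \<longrightarrow>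
         rho_type (\<lambda>r. (\<gamma> r) ^ k) (emb_W \<gamma> \<kappa> k v)) \<and>
     (\<forall>k (v::'m list \<Rightarrow> real^'m \<Rightarrow> complex). (\<forall>js. length js \<le> k \<longrightarrow> Linf (v js)) \<longrightarrow>
         (\<exists>\<gamma>. admissible \<gamma> \<and> rho_type logfun (emb_W \<gamma> \<kappa> k v) \<and>
              (\<forall>j. rho_type logfun (\<lambda>\<phi>. pd j (emb_W \<gamma> \<kappa> k v \<phi>))))))"
proof -
  note sk = assms(1)
  have P1: "rho_type logfun (emb_W logfun \<kappa> 1 v)"
    if L: "\<forall>js. length js \<le> 1 \<longrightarrow> Linf (v js)" for v :: "'m list \<Rightarrow> real^'m \<Rightarrow> complex"
  proof (rule rho_typeI[where \<gamma>=logfun and n=1])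
    fix \<phi> :: "real^'m \<Rightarrow> complex" and y assume g: "1 \<le> logfun (lm \<phi>)"
    show "norm (emb_W logfun \<kappa> 1 v \<phi> y) \<le> (\<Sum>js\<in>{js. length js \<le> 1}. Bv v js * Iint \<kappa> js) * logfun (lm \<phi>) ^ 1"
      using embW_bound[OF sk L, of logfun \<phi> y] g by simp
  next
    fix C :: real assume "C > 0"
    then show "\<exists>\<eta>. 0 < \<eta> \<and> \<eta> < 1 \<and> (\<forall>\<epsilon>. 0 < \<epsilon> \<and> \<epsilon> < \<eta> \<longrightarrow> 1 \<le> logfun (C * \<epsilon>) \<and> logfun (C * \<epsilon>) ^ 1 \<le> logfun (C * \<epsilon>))"
      using logfun_ev by simp
  qed
  have P2: "bounded_type (emb_Linf logfun \<kappa> u) \<and> (\<forall>j. rho_type logfun (\<lambda>\<phi>. pd j (emb_Linf logfun \<kappa> u \<phi>)))"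
    if u: "Linf u" for u :: "real^'m \<Rightarrow> complex"
  proof -
    have L: "\<forall>js::'m list. length js \<le> 0 \<longrightarrow> Linf ((\<lambda>_. u) js)" using u by simp
    have E: "emb_Linf logfun \<kappa> u \<phi> = emb_W logfun \<kappa> 0 (\<lambda>_. u) \<phi>" for \<phi>
      by (simp add: fun_eq_iff embLinf_eq)
    have "bounded_type (emb_Linf logfun \<kappa> u)"
    proof (rule bounded_typeI[where \<gamma>=logfun])
      fix \<phi> :: "real^'m \<Rightarrow> complex" and y assume g: "1 \<le> logfun (lm \<phi>)"
      show "norm (emb_Linf logfun \<kappa> u \<phi> y) \<le> (\<Sum>js\<in>{js::'m list. length js \<le> 0}. Bv (\<lambda>_. u) js * Iint \<kappa> js)"
        unfolding E using embW_bound[OF sk L, of logfun \<phi> y] g by simp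
    next
      fix C :: real assume "C > 0"
      then show "\<exists>\<eta>. 0 < \<eta> \<and> \<eta> < 1 \<and> (\<forall>\<epsilon>. 0 < \<epsilon> \<and> \<epsilon> < \<eta> \<longrightarrow> 1 \<le> logfun (C * \<epsilon>))"
        by (rule logfun_ev)
    qed
    moreover have "rho_type logfun (\<lambda>\<phi>. pd j (emb_Linf logfun \<kappa> u \<phi>))" for j
    proof (rule rho_typeI[where \<gamma>=logfun and n=1])
      fix \<phi> :: "real^'m \<Rightarrow> complex" and y assume g: "1 \<le> logfun (lm \<phi>)"
      show "norm (pd j (emb_Linf logfun \<kappa> u \<phi>) y) \<le> (\<Sum>js\<in>{js::'m list. length js \<le> 0}. Bv (\<lambda>_. u) js * Iint \<kappa> (j # js)) * logfun (lm \<phi>) ^ 1"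
        unfolding E using embW_pd_bound[OF sk L, of logfun \<phi> j y] g by simp
    next
      fix C :: real assume "C > 0"
      then show "\<exists>\<eta>. 0 < \<eta> \<and> \<eta> < 1 \<and> (\<forall>\<epsilon>. 0 < \<epsilon> \<and> \<epsilon> < \<eta> \<longrightarrow> 1 \<le> logfun (C * \<epsilon>) \<and> logfun (C * \<epsilon>) ^ 1 \<le> logfun (C * \<epsilon>))"
        using logfun_ev by simp
    qed
    ultimately show ?thesis by blast
  qed
  have P3: "rho_type (\<lambda>r. (\<gamma> r) ^ k) (emb_W \<gamma> \<kappa> k v)"
    if adm: "admissible \<gamma>" and L: "\<forall>js. length js \<le> k \<longrightarrow> Linf (v js)"
    for \<gamma> k and v :: "'m list \<Rightarrow> real^'m \<Rightarrow> complex"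
  proof (rule rho_typeI[where \<gamma>=\<gamma> and n=k])
    fix \<phi> :: "real^'m \<Rightarrow> complex" and y assume g: "1 \<le> \<gamma> (lm \<phi>)"
    show "norm (emb_W \<gamma> \<kappa> k v \<phi> y) \<le> (\<Sum>js\<in>{js. length js \<le> k}. Bv v js * Iint \<kappa> js) * \<gamma> (lm \<phi>) ^ k"
      using embW_bound[OF sk L, of \<gamma> \<phi> y] g by simp
  next
    fix C :: real assume C: "C > 0"
    have "filterlim \<gamma> at_top (at_right 0)" using adm by (simp add: admissible_def)
    then have "eventually (\<lambda>r. 1 \<le> \<gamma> r) (at_right 0)" unfolding filterlim_at_top by blast
    from ev_at_right[OF this C]
    show "\<exists>\<eta>. 0 < \<eta> \<and> \<eta> < 1 \<and> (\<forall>\<epsilon>. 0 < \<epsilon> \<and> \<epsilon> < \<eta> \<longrightarrow> 1 \<le> \<gamma> (C * \<epsilon>) \<and> \<gamma> (C * \<epsilon>) ^ k \<le> \<gamma> (C * \<epsilon>) ^ k)"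
      by simp
  qed
  have P4: "\<exists>\<gamma>. admissible \<gamma> \<and> rho_type logfun (emb_W \<gamma> \<kappa> k v) \<and>
              (\<forall>j. rho_type logfun (\<lambda>\<phi>. pd j (emb_W \<gamma> \<kappa> k v \<phi>)))"
    if L: "\<forall>js. length js \<le> k \<longrightarrow> Linf (v js)" for k and v :: "'m list \<Rightarrow> real^'m \<Rightarrow> complex"
  proof (intro exI[of _ "\<lambda>r. root (Suc k) (ln (1 / r))"] conjI allI)
    let ?g = "\<lambda>r. root (Suc k) (ln (1 / r))"
    show "admissible ?g" by (rule admissible_rootlog)
    show "rho_type logfun (emb_W ?g \<kappa> k v)"
    proof (rule rho_typeI[where \<gamma>="?g" and n=k])
      fix \<phi> :: "real^'m \<Rightarrow> complex" and y assume g: "1 \<le> ?g (lm \<phi>)"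
      show "norm (emb_W ?g \<kappa> k v \<phi> y) \<le> (\<Sum>js\<in>{js. length js \<le> k}. Bv v js * Iint \<kappa> js) * ?g (lm \<phi>) ^ k"
        using embW_bound[OF sk L, of ?g \<phi> y] g by simp
    next
      fix C :: real assume C: "C > 0"
      show "\<exists>\<eta>. 0 < \<eta> \<and> \<eta> < 1 \<and> (\<forall>\<epsilon>. 0 < \<epsilon> \<and> \<epsilon> < \<eta> \<longrightarrow> 1 \<le> ?g (C * \<epsilon>) \<and> ?g (C * \<epsilon>) ^ k \<le> logfun (C * \<epsilon>))"
        by (rule rootlog_ev[OF C]) simp
    qed
    fix j
    show "rho_type logfun (\<lambda>\<phi>. pd j (emb_W ?g \<kappa> k v \<phi>))"
    proof (rule rho_typeI[where \<gamma>="?g" and n="Suc k"])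
      fix \<phi> :: "real^'m \<Rightarrow> complex" and y assume g: "1 \<le> ?g (lm \<phi>)"
      show "norm (pd j (emb_W ?g \<kappa> k v \<phi>) y) \<le> (\<Sum>js\<in>{js. length js \<le> k}. Bv v js * Iint \<kappa> (j # js)) * ?g (lm \<phi>) ^ Suc k"
        using embW_pd_bound[OF sk L, of ?g \<phi> j y] g by simp
    next
      fix C :: real assume C: "C > 0"
      show "\<exists>\<eta>. 0 < \<eta> \<and> \<eta> < 1 \<and> (\<forall>\<epsilon>. 0 < \<epsilon> \<and> \<epsilon> < \<eta> \<longrightarrow> 1 \<le> ?g (C * \<epsilon>) \<and> ?g (C * \<epsilon>) ^ Suc k \<le> logfun (C * \<epsilon>))"
        by (rule rootlog_ev[OF C]) simp
    qed
  qed
  show ?thesis using P1 P2 P3 P4 by blast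
qed

end
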